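(* Let $(\mathfrak{A},\mathfrak{A}_0)$ be a *-semisimple CQ*-algebra with unit $I$ as in the context, let $X\in\mathfrak{A}$, and suppose $\alpha\in\mathbb{C}$ is a generalized eigenvalue of $X$. Then $X-\alpha I$ has no generalized left inverse.
   Context: Let $\mathfrak{A}_0$ be a unital C*-algebra with C*-norm $\|\cdot\|_0$ and unit $I$, and $\|\cdot\|$ another norm on $\mathfrak{A}_0$ with $\|A\|\le\|A\|_0$, $\|AB\|\le\|A\|\,\|B\|_0$, $\|A^*\|=\|A\|$. $\mathfrak{A}$ is the $\|\cdot\|$-completion of $\mathfrak{A}_0$, with $XA,AX,X^*$ ($X\in\mathfrak{A},A\in\mathfrak{A}_0$) defined as $\|\cdot\|$-limits of $A_nA$, $AA_n$, $A_n^*$ for $A_n\in\mathfrak{A}_0$, $A_n\to X$. $\mathcal{P}_{\mathfrak{A}_0}(\mathfrak{A})$ is the set of sesquilinear forms $\varphi$ on $\mathfrak{A}\times\mathfrak{A}$ with $\varphi(X,X)\ge0$, $\varphi(XA,B)=\varphi(A,X^*B)$ for $X\in\mathfrak{A}$, $A,B\in\mathfrak{A}_0$, and $|\varphi(X,Y)|\le\gamma\|X\|\|Y\|$ for some $\gamma>0$; $\mathcal{S}_{\mathfrak{A}_0}(\mathfrak{A})$ is the subset with $\gamma\le1$. *-semisimple: for every $X\ne0$ there is $\varphi\in\mathcal{S}_{\mathfrak{A}_0}(\mathfrak{A})$ with $\varphi(X,X)>0$. $Z\in\mathfrak{A}$ has a generalized left inverse if there exists $Y\in\mathfrak{A}$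 with $\varphi(ZA,Y^*B)=\varphi(A,B)$ for all $\varphi\in\mathcal{S}_{\mathfrak{A}_0}(\mathfrak{A})$ and all $A,B\in\mathfrak{A}_0$. A complex number $\alpha$ is a generalized eigenvalue of $X$ if there exist a nonzero $\varphi\in\mathcal{P}_{\mathfrak{A}_0}(\mathfrak{A})$ and $A\in\mathfrak{A}_0$ with $\varphi(A,A)>0$ and $\varphi(XA-\alpha A,B)=0$ for all $B\in\mathfrak{A}_0$. *)

theory Defs
  imports "HOL-Analysis.Analysis"
begin

text \<open>
  A CQ*-algebra (\<AA>, \<AA>0) is modelled on a Banach space type 'a (the norm of 'a is the
  norm \<parallel>.\<parallel>, and 'a is the \<parallel>.\<parallel>-completion of the dense subset A0).
\<close>

record 'a cqa =
  A0    :: "'a set"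
  cscal :: "complex \<Rightarrow> 'a \<Rightarrow> 'a"
  mul   :: "'a \<Rightarrow> 'a \<Rightarrow> 'a"             \<comment> \<open>multiplication (meaningful when one factor is in \<AA>0)\<close>
  inv   :: "'a \<Rightarrow> 'a"                  \<comment> \<open>involution X \<mapsto> X*\<close>
  norm0 :: "'a \<Rightarrow> real"
  unit  :: "'a"

definition complex_banach_structure :: "'a::banach cqa \<Rightarrow> bool" where
  "complex_banach_structure S \<longleftrightarrow>
     (\<forall>r x. cscal S (complex_of_real r) x = r *\<^sub>R x) \<and>
     (\<forall>a x y. cscal S a (x + y) = cscal S a x + cscal S a y) \<and>
     (\<forall>a b x. cscal S (a + b) x = cscal S a x + cscal S b x) \<and>
     (\<forall>a b x. cscal S (a * b) x = cscal S a (cscal S b x)) \<and>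
     (\<forall>x. cscal S 1 x = x) \<and>
     (\<forall>a x. norm (cscal S a x) = cmod a * norm x)"

definition unital_cstar_algebra :: "'a::banach cqa \<Rightarrow> bool" where
  "unital_cstar_algebra S \<longleftrightarrow>
     0 \<in> A0 S \<and> unit S \<in> A0 S \<and>
     (\<forall>A\<in>A0 S. \<forall>B\<in>A0 S. A + B \<in> A0 S) \<and>
     (\<forall>a. \<forall>A\<in>A0 S. cscal S a A \<in> A0 S) \<and>
     (\<forall>A\<in>A0 S. \<forall>B\<in>A0 S. mul S A B \<in> A0 S) \<and>
     (\<forall>A\<in>A0 S. inv S A \<in> A0 S) \<and>
     \<comment> \<open>associative bilinear multiplication with unit\<close>
     (\<forall>A\<in>A0 S. \<forall>B\<in>A0 S. \<forall>C\<in>A0 S. mul S (mul S A B) C = mul S A (mul S B C)) \<and>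
     (\<forall>A\<in>A0 S. \<forall>B\<in>A0 S. \<forall>C\<in>A0 S. mul S (A + B) C = mul S A C + mul S B C) \<and>
     (\<forall>A\<in>A0 S. \<forall>B\<in>A0 S. \<forall>C\<in>A0 S. mul S A (B + C) = mul S A B + mul S A C) \<and>
     (\<forall>a. \<forall>A\<in>A0 S. \<forall>B\<in>A0 S. mul S (cscal S a A) B = cscal S a (mul S A B)) \<and>
     (\<forall>a. \<forall>A\<in>A0 S. \<forall>B\<in>A0 S. mul S A (cscal S a B) = cscal S a (mul S A B)) \<and>
     (\<forall>A\<in>A0 S. mul S (unit S) A = A \<and> mul S A (unit S) = A) \<and>
     \<comment> \<open>involution\<close>
     (\<forall>A\<in>A0 S. inv S (inv S A) = A) \<and>
     (\<forall>A\<in>A0 S. \<forall>B\<in>A0 S. inv S (A + B) = inv S A + inv S B) \<and>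
     (\<forall>a. \<forall>A\<in>A0 S. inv S (cscal S a A) = cscal S (cnj a) (inv S A)) \<and>
     (\<forall>A\<in>A0 S. \<forall>B\<in>A0 S. inv S (mul S A B) = mul S (inv S B) (inv S A)) \<and>
     \<comment> \<open>C*-norm, complete on A0\<close>
     (\<forall>A\<in>A0 S. norm0 S A = 0 \<longleftrightarrow> A = 0) \<and>
     (\<forall>A\<in>A0 S. 0 \<le> norm0 S A) \<and>
     (\<forall>A\<in>A0 S. \<forall>B\<in>A0 S. norm0 S (A + B) \<le> norm0 S A + norm0 S B) \<and>
     (\<forall>a. \<forall>A\<in>A0 S. norm0 S (cscal S a A) = cmod a * norm0 S A) \<and>
     (\<forall>A\<in>A0 S. \<forall>B\<in>A0 S. norm0 S (mul S A B) \<le> norm0 S A * norm0 S B) \<and>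
     (\<forall>A\<in>A0 S. norm0 S (mul S (inv S A) A) = (norm0 S A)\<^sup>2) \<and>
     (\<forall>F. (\<forall>n. F n \<in> A0 S) \<longrightarrow>
          (\<forall>e>0. \<exists>N. \<forall>m\<ge>N. \<forall>n\<ge>N. norm0 S (F m - F n) < e) \<longrightarrow>
          (\<exists>L\<in>A0 S. (\<lambda>n. norm0 S (F n - L)) \<longlonglongrightarrow> 0))"

text \<open>The CQ*-algebra conditions: \<AA> (the type 'a) is the \<parallel>.\<parallel>-completion of \<AA>0,
  with the compatibility conditions on the norms, and XA, AX, X* for X \<in> \<AA>, A \<in> \<AA>0
  defined as \<parallel>.\<parallel>-limits.\<close>
definition cq_star_algebra :: "'a::banach cqa \<Rightarrow> bool" where
  "cq_star_algebra S \<longleftrightarrow>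
     complex_banach_structure S \<and> unital_cstar_algebra S \<and>
     closure (A0 S) = UNIV \<and>
     (\<forall>A\<in>A0 S. norm A \<le> norm0 S A) \<and>
     (\<forall>A\<in>A0 S. \<forall>B\<in>A0 S. norm (mul S A B) \<le> norm A * norm0 S B) \<and>
     (\<forall>A\<in>A0 S. norm (inv S A) = norm A) \<and>
     (\<forall>X A F. A \<in> A0 S \<longrightarrow> (\<forall>n. F n \<in> A0 S) \<longrightarrow> F \<longlonglongrightarrow> X \<longrightarrow>
         (\<lambda>n. mul S (F n) A) \<longlonglongrightarrow> mul S X A \<and>
         (\<lambda>n. mul S A (F n)) \<longlonglongrightarrow> mul S A X \<and>
         (\<lambda>n. inv S (F n)) \<longlonglongrightarrow> inv S X)"

definition sesquilinear :: "'a::real_normed_vector cqa \<Rightarrow> ('a \<Rightarrow> 'a \<Rightarrow> complex) \<Rightarrow> bool" where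
  "sesquilinear S \<phi> \<longleftrightarrow>
     (\<forall>X X' Y. \<phi> (X + X') Y = \<phi> X Y + \<phi> X' Y) \<and>
     (\<forall>a X Y. \<phi> (cscal S a X) Y = a * \<phi> X Y) \<and>
     (\<forall>X Y Y'. \<phi> X (Y + Y') = \<phi> X Y + \<phi> X Y') \<and>
     (\<forall>a X Y. \<phi> X (cscal S a Y) = cnj a * \<phi> X Y)"

definition P_forms :: "'a::real_normed_vector cqa \<Rightarrow> ('a \<Rightarrow> 'a \<Rightarrow> complex) set" where
  "P_forms S = {\<phi>. sesquilinear S \<phi> \<and>
     (\<forall>X. \<phi> X X \<in> \<real> \<and> 0 \<le> Re (\<phi> X X)) \<and>
     (\<forall>X. \<forall>A\<in>A0 S. \<forall>B\<in>A0 S. \<phi> (mul S X A) B = \<phi> A (mul S (inv S X) B)) \<and>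
     (\<exists>\<gamma>>0. \<forall>X Y. cmod (\<phi> X Y) \<le> \<gamma> * norm X * norm Y)}"

text \<open>\<S>_{\<AA>0}(\<AA>): the elements of \<P>_{\<AA>0}(\<AA>) with \<gamma> \<le> 1.\<close>
definition S_forms :: "'a::real_normed_vector cqa \<Rightarrow> ('a \<Rightarrow> 'a \<Rightarrow> complex) set" where
  "S_forms S = {\<phi>. sesquilinear S \<phi> \<and>
     (\<forall>X. \<phi> X X \<in> \<real> \<and> 0 \<le> Re (\<phi> X X)) \<and>
     (\<forall>X. \<forall>A\<in>A0 S. \<forall>B\<in>A0 S. \<phi> (mul S X A) B = \<phi> A (mul S (inv S X) B)) \<and>
     (\<forall>X Y. cmod (\<phi> X Y) \<le> norm X * norm Y)}"

definition star_semisimple :: "'a::real_normed_vector cqa \<Rightarrow> bool" where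
  "star_semisimple S \<longleftrightarrow>
     (\<forall>X. X \<noteq> 0 \<longrightarrow> (\<exists>\<phi>\<in>S_forms S. \<phi> X X \<in> \<real> \<and> Re (\<phi> X X) > 0))"

definition has_gen_left_inverse :: "'a::real_normed_vector cqa \<Rightarrow> 'a \<Rightarrow> bool" where
  "has_gen_left_inverse S Z \<longleftrightarrow>
     (\<exists>Y. \<forall>\<phi>\<in>S_forms S. \<forall>A\<in>A0 S. \<forall>B\<in>A0 S.
        \<phi> (mul S Z A) (mul S (inv S Y) B) = \<phi> A B)"

definition gen_eigenvalue :: "'a::real_normed_vector cqa \<Rightarrow> 'a \<Rightarrow> complex \<Rightarrow> bool" where
  "gen_eigenvalue S X \<alpha> \<longleftrightarrow>
     (\<exists>\<phi>\<in>P_forms S. \<phi> \<noteq> (\<lambda>_ _. 0) \<and> (\<exists>A\<in>A0 S. \<phi> A A \<in> \<real> \<and> Re (\<phi> A A) > 0 \<and>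
        (\<forall>B\<in>A0 S. \<phi> (mul S X A - cscal S \<alpha> A) B = 0)))"

end

theory Submission
  imports Defs
begin

lemma cqD:
  assumes "cq_star_algebra S"
  shows "complex_banach_structure S" "unital_cstar_algebra S" "closure (A0 S) = UNIV"
  using assms unfolding cq_star_algebra_def by blast+

lemma seq_A0:
  assumes "cq_star_algebra S"
  obtains F where "\<forall>n. F n \<in> A0 S" "F \<longlonglongrightarrow> x"
proof -
  have "x \<in> closure (A0 S)" using cqD(3)[OF assms] by simp
  then obtain f where "\<forall>n. f n \<in> A0 S" "f \<longlonglongrightarrow> x" unfolding closure_sequential by blast
  then show ?thesis by (rule that)
qed

lemma cont_zero:
  fixes \<phi> :: "'a::real_normed_vector \<Rightarrow> 'a \<Rightarrow> complex"
  assumes add: "\<forall>X Y Y'. \<phi> X (Y + Y') = \<phi> X Y + \<phi> X Y'"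
    and bd: "\<forall>X Y. cmod (\<phi> X Y) \<le> g * norm X * norm Y"
    and lim: "G \<longlonglongrightarrow> W" and z: "\<forall>n. \<phi> Z (G n) = 0"
  shows "\<phi> Z W = 0"
proof -
  have eq: "\<phi> Z W = \<phi> Z (W - G n)" for n
    using add[rule_format, of Z "G n" "W - G n"] z by simp
  have le: "cmod (\<phi> Z W) \<le> g * norm Z * norm (W - G n)" for n
    unfolding eq[of n] using bd by blast
  have "(\<lambda>n. norm (W - G n)) \<longlonglongrightarrow> 0"
  proof -
    have "(\<lambda>n. W - G n) \<longlonglongrightarrow> W - W" by (intro tendsto_diff tendsto_const lim)
    then have "(\<lambda>n. W - G n) \<longlonglongrightarrow> 0" by simp
    then show ?thesis by (rule tendsto_norm_zero)
  qed
  then have "(\<lambda>n. g * norm Z * norm (W - G n)) \<longlonglongrightarrow> g * norm Z * 0"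
    by (intro tendsto_mult tendsto_const)
  then have "cmod (\<phi> Z W) \<le> 0"
    using le by (intro tendsto_lowerbound[where F=sequentially]) (auto)
  then show ?thesis by simp
qed

lemma ucD:
  assumes "unital_cstar_algebra S"
  shows ucD_add: "A \<in> A0 S \<Longrightarrow> B \<in> A0 S \<Longrightarrow> A + B \<in> A0 S"
    and ucD_scal: "A \<in> A0 S \<Longrightarrow> cscal S a A \<in> A0 S"
    and ucD_mul: "A \<in> A0 S \<Longrightarrow> B \<in> A0 S \<Longrightarrow> mul S A B \<in> A0 S"
    and ucD_unit: "unit S \<in> A0 S"
    and ucD_distl: "A \<in> A0 S \<Longrightarrow> B \<in> A0 S \<Longrightarrow> C \<in> A0 S \<Longrightarrow> mul S (A + B) C = mul S A C + mul S B C"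
    and ucD_scl: "A \<in> A0 S \<Longrightarrow> B \<in> A0 S \<Longrightarrow> mul S (cscal S a A) B = cscal S a (mul S A B)"
    and ucD_unitl: "A \<in> A0 S \<Longrightarrow> mul S (unit S) A = A"
  using assms unfolding unital_cstar_algebra_def by simp_all

lemma cqD_lim:
  assumes "cq_star_algebra S" "A \<in> A0 S" "\<forall>n. F n \<in> A0 S" "F \<longlonglongrightarrow> X"
  shows "(\<lambda>n. mul S (F n) A) \<longlonglongrightarrow> mul S X A"
proof -
  have "\<forall>X A F. A \<in> A0 S \<longrightarrow> (\<forall>n. F n \<in> A0 S) \<longrightarrow> F \<longlonglongrightarrow> X \<longrightarrow>
         (\<lambda>n. mul S (F n) A) \<longlonglongrightarrow> mul S X A \<and>
         (\<lambda>n. mul S A (F n)) \<longlonglongrightarrow> mul S A X \<and>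
         (\<lambda>n. inv S (F n)) \<longlonglongrightarrow> inv S X"
    using assms(1) unfolding cq_star_algebra_def by (elim conjE)
  then show ?thesis using assms(2-4) by blast
qed

lemma P_formsD:
  assumes "\<phi> \<in> P_forms S"
  shows "sesquilinear S \<phi>" and "\<forall>X. \<phi> X X \<in> \<real> \<and> 0 \<le> Re (\<phi> X X)"
    and "\<forall>X. \<forall>A\<in>A0 S. \<forall>B\<in>A0 S. \<phi> (mul S X A) B = \<phi> A (mul S (inv S X) B)"
    and "\<exists>\<gamma>>0. \<forall>X Y. cmod (\<phi> X Y) \<le> \<gamma> * norm X * norm Y"
proof -
  have H: "sesquilinear S \<phi> \<and>
     (\<forall>X. \<phi> X X \<in> \<real> \<and> 0 \<le> Re (\<phi> X X)) \<and>
     (\<forall>X. \<forall>A\<in>A0 S. \<forall>B\<in>A0 S. \<phi> (mul S X A) B = \<phi> A (mul S (inv S X) B)) \<and>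
     (\<exists>\<gamma>>0. \<forall>X Y. cmod (\<phi> X Y) \<le> \<gamma> * norm X * norm Y)"
    using assms unfolding P_forms_def by (rule CollectD)
  then show "sesquilinear S \<phi>" by (rule conjunct1)
  from H show "\<forall>X. \<phi> X X \<in> \<real> \<and> 0 \<le> Re (\<phi> X X)" by (elim conjE)
  from H show "\<forall>X. \<forall>A\<in>A0 S. \<forall>B\<in>A0 S. \<phi> (mul S X A) B = \<phi> A (mul S (inv S X) B)" by (elim conjE)
  from H show "\<exists>\<gamma>>0. \<forall>X Y. cmod (\<phi> X Y) \<le> \<gamma> * norm X * norm Y" by (elim conjE)
qed

lemma mul_sub:
  assumes cq: "cq_star_algebra S" and A: "A \<in> A0 S" and C: "C \<in> A0 S"
  shows "mul S (X - C) A = mul S X A - mul S C A"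
proof -
  obtain F where F: "\<forall>n. F n \<in> A0 S" "F \<longlonglongrightarrow> X" using seq_A0[OF cq] by blast
  have cb: "complex_banach_structure S" and uc: "unital_cstar_algebra S"
    using cqD[OF cq] by auto
  have neg: "cscal S (-1) x = - x" for x
  proof -
    have "cscal S (complex_of_real (-1)) x = (-1) *\<^sub>R x"
      using cb unfolding complex_banach_structure_def by blast
    then show ?thesis by simp
  qed
  have negC: "cscal S (-1) C \<in> A0 S" using ucD_scal[OF uc C] .
  have eqC: "F n - C = F n + cscal S (-1) C" for n using neg by simp
  have inA: "F n - C \<in> A0 S" for n
    unfolding eqC using ucD_add[OF uc F(1)[rule_format] negC] .
  have meq: "mul S (F n - C) A = mul S (F n) A - mul S C A" for n
  proof -
    have "mul S (F n - C) A = mul S (F n + cscal S (-1) C) A" by (simp only: eqC)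
    also have "\<dots> = mul S (F n) A + mul S (cscal S (-1) C) A"
      using ucD_distl[OF uc F(1)[rule_format] negC A] .
    also have "mul S (cscal S (-1) C) A = cscal S (-1) (mul S C A)"
      using ucD_scl[OF uc C A] .
    also have "mul S (F n) A + cscal S (-1) (mul S C A) = mul S (F n) A - mul S C A"
      using neg by simp
    finally show ?thesis .
  qed
  have l1: "(\<lambda>n. mul S (F n - C) A) \<longlonglongrightarrow> mul S (X - C) A"
    using cqD_lim[OF cq A, of "\<lambda>n. F n - C" "X - C"] inA F(2)
    by (simp add: tendsto_diff)
  have l2: "(\<lambda>n. mul S (F n) A) \<longlonglongrightarrow> mul S X A"
    using cqD_lim[OF cq A F] .
  have "(\<lambda>n. mul S (F n - C) A) \<longlonglongrightarrow> mul S X A - mul S C A"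
    unfolding meq by (intro tendsto_diff l2 tendsto_const)
  then show ?thesis using l1 LIMSEQ_unique by blast
qed

theorem proposition4p12:
  fixes S :: "'a::banach cqa" and X :: 'a and \<alpha> :: complex
  assumes "cq_star_algebra S"
    and "star_semisimple S"
    and "gen_eigenvalue S X \<alpha>"
  shows "\<not> has_gen_left_inverse S (X - cscal S \<alpha> (unit S))"
proof
  assume hl: "has_gen_left_inverse S (X - cscal S \<alpha> (unit S))"
  have cq: "cq_star_algebra S" by fact
  have uc: "unital_cstar_algebra S" using cqD(2)[OF cq] .
  obtain \<phi> A where \<phi>: "\<phi> \<in> P_forms S" and A: "A \<in> A0 S" and pos: "Re (\<phi> A A) > 0"
    and ev: "\<forall>B\<in>A0 S. \<phi> (mul S X A - cscal S \<alpha> A) B = 0"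
    using assms(3) unfolding gen_eigenvalue_def by blast
  obtain g where g: "g > 0" "\<forall>X Y. cmod (\<phi> X Y) \<le> g * norm X * norm Y"
    using P_formsD(4)[OF \<phi>] by blast
  define \<psi> where "\<psi> = (\<lambda>x y. \<phi> x y / complex_of_real g)"
  have ses: "sesquilinear S \<phi>" using P_formsD(1)[OF \<phi>] .
  have ses2: "sesquilinear S \<psi>"
    using ses unfolding sesquilinear_def \<psi>_def by (simp add: add_divide_distrib)
  have bd: "\<forall>X Y. cmod (\<psi> X Y) \<le> norm X * norm Y"
  proof (intro allI)
    fix X Y
    have "cmod (\<psi> X Y) = cmod (\<phi> X Y) / g" using g(1) by (simp add: \<psi>_def norm_divide)
    also have "\<dots> \<le> g * norm X * norm Y / g" using g by (intro divide_right_mono) auto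
    finally show "cmod (\<psi> X Y) \<le> norm X * norm Y" using g(1) by simp
  qed
  have pos2: "\<forall>X. \<psi> X X \<in> \<real> \<and> 0 \<le> Re (\<psi> X X)"
  proof
    fix X
    have "\<phi> X X \<in> \<real> \<and> 0 \<le> Re (\<phi> X X)" using P_formsD(2)[OF \<phi>] by blast
    then show "\<psi> X X \<in> \<real> \<and> 0 \<le> Re (\<psi> X X)" using g(1)
      by (auto simp: \<psi>_def Re_divide_of_real)
  qed
  have inv2: "\<forall>X. \<forall>A\<in>A0 S. \<forall>B\<in>A0 S. \<psi> (mul S X A) B = \<psi> A (mul S (inv S X) B)"
    using P_formsD(3)[OF \<phi>] unfolding \<psi>_def by simp
  have \<psi>S: "\<psi> \<in> S_forms S" unfolding S_forms_def by (rule CollectI, intro conjI ses2 bd pos2 inv2)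
  obtain Y where Y: "\<forall>\<phi>\<in>S_forms S. \<forall>A\<in>A0 S. \<forall>B\<in>A0 S.
        \<phi> (mul S (X - cscal S \<alpha> (unit S)) A) (mul S (inv S Y) B) = \<phi> A B"
    using hl unfolding has_gen_left_inverse_def by blast
  have e1: "\<psi> (mul S (X - cscal S \<alpha> (unit S)) A) (mul S (inv S Y) A) = \<psi> A A"
    using Y \<psi>S A by blast
  have uA: "cscal S \<alpha> (unit S) \<in> A0 S" using ucD_scal[OF uc ucD_unit[OF uc]] .
  have "mul S (cscal S \<alpha> (unit S)) A = cscal S \<alpha> (mul S (unit S) A)"
    using ucD_scl[OF uc ucD_unit[OF uc] A] .
  also have "\<dots> = cscal S \<alpha> A" using ucD_unitl[OF uc A] by simp
  finally have mz: "mul S (X - cscal S \<alpha> (unit S)) A = mul S X A - cscal S \<alpha> A"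
    using mul_sub[OF cq A uA] by simp
  obtain H where H: "\<forall>n. H n \<in> A0 S" "H \<longlonglongrightarrow> inv S Y" using seq_A0[OF cq] by blast
  have lim: "(\<lambda>n. mul S (H n) A) \<longlonglongrightarrow> mul S (inv S Y) A"
    using cqD_lim[OF cq A H] .
  have HA: "mul S (H n) A \<in> A0 S" for n using ucD_mul[OF uc H(1)[rule_format] A] .
  have z: "\<forall>n. \<psi> (mul S X A - cscal S \<alpha> A) (mul S (H n) A) = 0"
    using ev HA by (simp add: \<psi>_def)
  have add: "\<forall>X Y Y'. \<psi> X (Y + Y') = \<psi> X Y + \<psi> X Y'" using ses2 unfolding sesquilinear_def by blast
  have bd1: "\<forall>X Y. cmod (\<psi> X Y) \<le> 1 * norm X * norm Y" using bd by simp
  have "\<psi> (mul S X A - cscal S \<alpha> A) (mul S (inv S Y) A) = 0"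
    by (rule cont_zero[OF add bd1 lim z])
  then have "\<psi> A A = 0" using e1 mz by simp
  then have "\<phi> A A = 0" using g(1) by (simp add: \<psi>_def)
  then show False using pos by simp
qed

end
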